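(* The function $\tilde H:(0,+\infty)\to\mathbb R$ is monotonically decreasing on $(0,1/\sqrt2)$ and monotonically increasing on $[1/\sqrt2,+\infty)$. Moreover, $$\lim_{q\to 0^+}\tilde H(q)=\lim_{q\to+\infty}\tilde H(q)=1.$$
   Context: For $q>0$, let $\tilde q$ be the root, in the closed upper half-plane $\Im z\ge 0$, of the cubic equation $q(z^3-z)+1=0$ having the smallest positive real part, and define $$\tilde H(q)=\exp\Big(\log\Big|\frac{\tilde q-1}{\tilde q+1}\Big|+q\,\Re(\tilde q^{2})\Big).$$ *)

theory Defs
  imports "HOL-Analysis.Analysis"
begin

definition qroots :: "real \<Rightarrow> complex set" where
  "qroots q = {z. complex_of_real q * (z ^ 3 - z) + 1 = 0 \<and> Im z \<ge> 0 \<and> Re z > 0}"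

definition qtilde :: "real \<Rightarrow> complex" where
  "qtilde q = (SOME z. z \<in> qroots q \<and> (\<forall>w\<in>qroots q. Re z \<le> Re w))"

definition Htilde :: "real \<Rightarrow> real" where
  "Htilde q = exp (ln (cmod ((qtilde q - 1) / (qtilde q + 1))) + q * Re ((qtilde q)^2))"

end

theory Submission
  imports Defs "HOL-Real_Asymp.Real_Asymp"
begin


lemma qtilde_complex:
  fixes q x :: real
  assumes q: "q > 0" and x: "x > 0" "3*x^2 \<ge> 1" and e: "2*x*(4*x^2-1)*q = 1"
  shows "qtilde q = Complex x (sqrt (3*x^2-1))"
proof -
  define y where "y = sqrt (3*x^2-1)"
  have y0: "y \<ge> 0" and y2: "y^2 = 3*x^2-1" using x by (auto simp: y_def)
  define z where "z = Complex x y"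
  have s: "z + cnj z = of_real (2*x)" by (simp add: z_def complex_eq_iff)
  have p: "z * cnj z = of_real (4*x^2-1)"
    using y2 by (simp add: z_def complex_eq_iff power2_eq_square)
  have e': "of_real q * of_real (2*x) * of_real (4*x^2-1) = (1::complex)"
    using e by (metis (mono_tags, lifting) mult.commute mult.left_commute of_real_1 of_real_mult)
  have fact: "of_real q*(w^3-w)+1 = of_real q*(w + of_real(2*x))*(w - z)*(w - cnj z)" for w
  proof -
    have "(w - z)*(w - cnj z) = w^2 - (z + cnj z)*w + z * cnj z" by algebra
    also have "\<dots> = w^2 - of_real (2*x) * w + of_real (4*x^2-1)" using s p by simp
    finally have "of_real q*(w + of_real(2*x))*(w - z)*(w - cnj z)
       = of_real q*(w + of_real(2*x))*(w^2 - of_real (2*x) * w + of_real (4*x^2-1))"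
      by (simp add: mult.assoc)
    also have "\<dots> = of_real q*(w^3-w) + of_real q * of_real (2*x) * of_real (4*x^2-1)"
      by (simp add: algebra_simps power2_eq_square power3_eq_cube)
    finally show ?thesis using e' by simp
  qed
  have qr: "qroots q = {z}"
  proof (intro equalityI subsetI)
    fix w assume "w \<in> qroots q"
    hence w: "of_real q*(w^3-w)+1 = 0" "Im w \<ge> 0" "Re w > 0" by (auto simp: qroots_def)
    from w(1) fact[of w] q have "w + of_real(2*x) = 0 \<or> w = z \<or> w = cnj z" by simp
    thus "w \<in> {z}"
    proof (elim disjE)
      assume "w + of_real(2*x) = 0" hence "Re w = -2*x" by (simp add: complex_eq_iff)
      thus ?thesis using w x by simp
    next
      assume "w = cnj z" hence "Im w = - y" by (simp add: z_def)
      hence "y = 0" using w y0 by simp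
      thus ?thesis using \<open>w = cnj z\<close> by (simp add: z_def complex_eq_iff)
    qed simp
  next
    fix w assume "w \<in> {z}"
    thus "w \<in> qroots q" using fact[of z] y0 x by (auto simp: qroots_def z_def)
  qed
  show ?thesis unfolding qtilde_def qr
    by (rule some_equality) (auto simp: z_def y_def)
qed

lemma qtilde_real:
  fixes q t :: real
  assumes t: "t > 0" "3*t^2 \<le> 1" and e: "q*(t - t^3) = 1"
  shows "qtilde q = complex_of_real t"
proof -
  have tt: "t - t^3 > 0" using t by (simp add: power2_eq_square power3_eq_cube)
  hence q: "q > 0" using e zero_less_mult_pos2[of q "t - t^3"] by simp
  define r where "r = sqrt (4 - 3*t^2)"
  have r0: "r > 0" and r2: "r^2 = 4 - 3*t^2" using t by (auto simp: r_def)
  define a where "a = (-t + r)/2"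
  define b where "b = (-t - r)/2"
  have b0: "b < 0" using r0 t by (simp add: b_def)
  have "(3*t)^2 \<le> r^2" using r2 t by simp
  hence "3*t \<le> r" using r0 by (meson power2_le_imp_le less_imp_le)
  hence at: "a \<ge> t" by (simp add: a_def)
  have e': "of_real q * of_real (t - t^3) = (1::complex)"
    using e by (metis of_real_1 of_real_mult)
  have fact: "of_real q*(w^3-w)+1 = of_real q*(w - of_real t)*(w - of_real a)*(w - of_real b)" for w :: complex
  proof -
    have ab: "a + b = -t" "a * b = t^2 - 1" using r2 by (auto simp: a_def b_def field_simps power2_eq_square)
    have "(w - of_real a)*(w - of_real b) = w^2 - of_real (a + b)*w + of_real (a * b)" unfolding of_real_add of_real_mult by algebra
    also have "\<dots> = w^2 + of_real t * w + of_real (t^2 - 1)" using ab by simp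
    finally have "of_real q*(w - of_real t)*(w - of_real a)*(w - of_real b)
       = of_real q*(w - of_real t)*(w^2 + of_real t * w + of_real (t^2 - 1))"
      by (simp add: mult.assoc)
    also have "\<dots> = of_real q*(w^3-w) + of_real q * of_real (t - t^3)"
      by (simp add: algebra_simps power2_eq_square power3_eq_cube)
    finally show ?thesis using e' by simp
  qed
  have mem: "w \<in> qroots q \<Longrightarrow> w = of_real t \<or> w = of_real a" for w
  proof -
    assume "w \<in> qroots q"
    hence w: "of_real q*(w^3-w)+1 = 0" "Re w > 0" by (auto simp: qroots_def)
    from w(1) fact[of w] q have "w = of_real t \<or> w = of_real a \<or> w = of_real b" by simp
    thus ?thesis using w b0 by auto
  qed
  have tin: "complex_of_real t \<in> qroots q" using fact[of "of_real t"] t by (simp add: qroots_def)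
  show ?thesis unfolding qtilde_def
  proof (rule some_equality)
    show "complex_of_real t \<in> qroots q \<and> (\<forall>w\<in>qroots q. Re (complex_of_real t) \<le> Re w)"
      using tin mem at by (metis Re_complex_of_real order_refl)
  next
    fix z assume "z \<in> qroots q \<and> (\<forall>w\<in>qroots q. Re z \<le> Re w)"
    hence "z = of_real t \<or> z = of_real a" "Re z \<le> t" using mem tin by auto
    thus "z = of_real t" using at by auto
  qed
qed



definition gf :: "real \<Rightarrow> real" where
  "gf x = (ln(2*x-1) - ln(2*x+1))/2 + (1-2*x^2)/(2*x*(4*x^2-1))"
definition kf :: "real \<Rightarrow> real" where
  "kf t = ln(1-t) - ln(1+t) + t/(1-t^2)"

lemma Htilde_complex:
  fixes q x :: real
  assumes q: "q > 0" and x: "x > 0" "3*x^2 \<ge> 1" and e: "2*x*(4*x^2-1)*q = 1"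
  shows "Htilde q = exp (gf x)"
proof -
  define y where "y = sqrt (3*x^2-1)"
  have y2: "y^2 = 3*x^2-1" using x by (auto simp: y_def)
  have qt: "qtilde q = Complex x y" using qtilde_complex[OF assms] by (simp add: y_def)
  have xh: "2*x > 1"
  proof (rule ccontr)
    assume "\<not> 2*x > 1" hence "2*x \<le> 1" by simp
    hence "(2*x)^2 \<le> 1^2" using x by (intro power_mono) auto
    hence "4*x^2 \<le> 1" by (simp add: power_mult_distrib)
    thus False using x by simp
  qed
  have m1: "cmod (Complex x y - 1) = sqrt (2*x*(2*x-1))"
    using y2 by (simp add: cmod_def complex_diff power2_eq_square algebra_simps)
  have m2: "cmod (Complex x y + 1) = sqrt (2*x*(2*x+1))"
    using y2 by (simp add: cmod_def power2_eq_square algebra_simps)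
  have "ln (cmod ((qtilde q - 1) / (qtilde q + 1))) = ln (sqrt (2*x*(2*x-1)) / sqrt (2*x*(2*x+1)))"
    by (simp add: qt norm_divide m1 m2)
  also have "\<dots> = (ln(2*x-1) - ln(2*x+1))/2"
    using x xh by (simp add: ln_div ln_sqrt ln_mult real_sqrt_mult)
  finally have l: "ln (cmod ((qtilde q - 1) / (qtilde q + 1))) = (ln(2*x-1) - ln(2*x+1))/2" .
  have r: "q * Re ((qtilde q)^2) = (1-2*x^2)/(2*x*(4*x^2-1))"
  proof -
    have "Re ((qtilde q)^2) = 1 - 2*x^2" using y2 by (simp add: qt power2_eq_square)
    moreover have "q = 1/(2*x*(4*x^2-1))" using e
      by (metis div_by_1 nonzero_mult_div_cancel_left one_neq_zero mult_zero_left mult.commute)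
    ultimately show ?thesis by simp
  qed
  show ?thesis unfolding Htilde_def gf_def l r ..
qed

lemma Htilde_real:
  fixes q t :: real
  assumes t: "t > 0" "3*t^2 \<le> 1" and e: "q*(t - t^3) = 1"
  shows "Htilde q = exp (kf t)"
proof -
  have qt: "qtilde q = of_real t" using qtilde_real[OF assms] .
  have t1: "t < 1"
  proof (rule ccontr)
    assume "\<not> t < 1" hence "1 \<le> t^2" by (simp add: one_le_power)
    thus False using t by simp
  qed
  have "(qtilde q - 1) / (qtilde q + 1) = of_real ((t-1)/(t+1))" by (simp add: qt)
  hence "cmod ((qtilde q - 1) / (qtilde q + 1)) = \<bar>(t-1)/(t+1)\<bar>" by (metis norm_of_real)
  also have "\<dots> = (1-t)/(1+t)" using t t1 by (simp add: abs_div)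
  finally have "cmod ((qtilde q - 1) / (qtilde q + 1)) = (1-t)/(1+t)" .
  hence l: "ln (cmod ((qtilde q - 1) / (qtilde q + 1))) = ln(1-t) - ln(1+t)"
    using t t1 by (simp add: ln_div)
  have tt: "t - t^3 = t*(1-t^2)" by (simp add: algebra_simps power2_eq_square power3_eq_cube)
  have "1 - t^2 > 0" using t by simp
  moreover have "q = 1/(t*(1-t^2))" using e unfolding tt
      by (metis div_by_1 nonzero_mult_div_cancel_left one_neq_zero mult_zero_left mult.commute)
  moreover have "Re ((qtilde q)^2) = t^2" by (simp add: qt)
  ultimately have r: "q * Re ((qtilde q)^2) = t/(1-t^2)"
    using t by (simp add: power2_eq_square)
  show ?thesis unfolding Htilde_def kf_def l r ..
qed


lemma aux2: "(w::real) \<noteq> 0 \<Longrightarrow> x \<noteq> 0 \<Longrightarrow> c/w + b/(2*x*w)^2 = (c*4*x^2*w + b)/(4*x^2*w^2)"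
  by (simp add: field_simps power2_eq_square)
lemma aux3: "(d::real) \<noteq> 0 \<Longrightarrow> A = 2*P \<Longrightarrow> A/(2*d) = P/d"
  by simp
lemma gf_deriv_eq:
  fixes x :: real assumes a: "2*x-1 \<noteq> 0" "2*x+1 \<noteq> 0" "x \<noteq> 0" "4*x^2-1 \<noteq> 0"
  shows "(1/(2*x-1) - 1/(2*x+1)) + 
      ((- (4*x)) * (2*x*(4*x^2-1)) - (1-2*x^2)*(24*x^2-2)) / (2*x*(4*x^2-1))^2
      = (12*x^2-1)*(2*x^2-1)/(2*x^2*(4*x^2-1)^2)"
proof -
  have u: "4*x^2-1 = (2*x-1)*(2*x+1)" by (simp add: algebra_simps power2_eq_square)
  have "1/(2*x-1) - 1/(2*x+1) = 2/((2*x-1)*(2*x+1))" using a by (simp add: field_simps)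
  hence e: "1/(2*x-1) - 1/(2*x+1) = 2/(4*x^2-1)" by (simp add: u)
  have "2/(4*x^2-1) + ((- (4*x)) * (2*x*(4*x^2-1)) - (1-2*x^2)*(24*x^2-2)) / (2*x*(4*x^2-1))^2
     = (2*4*x^2*(4*x^2-1) + ((- (4*x)) * (2*x*(4*x^2-1)) - (1-2*x^2)*(24*x^2-2)))/(4*x^2*(4*x^2-1)^2)"
    by (rule aux2[OF a(4) a(3)])
  also have "\<dots> = (12*x^2-1)*(2*x^2-1)/(2*x^2*(4*x^2-1)^2)"
  proof -
    have "4*x^2*(4*x^2-1)^2 = 2*(2*x^2*(4*x^2-1)^2)" by simp
    moreover have "2*x^2*(4*x^2-1)^2 \<noteq> 0" using a by simp
    ultimately show ?thesis by (simp only:) (rule aux3, assumption, simp add: algebra_simps power2_eq_square)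
  qed
  finally show ?thesis unfolding e .
qed

lemma aux_frac: "(u::real) \<noteq> 0 \<Longrightarrow> a/u + b/u^2 = (a*u + b)/u^2"
  by (simp add: field_simps power2_eq_square)

lemma kf_deriv_eq:
  fixes t :: real assumes a: "1-t \<noteq> 0" "1+t \<noteq> 0"
  shows "(-1/(1-t) - 1/(1+t)) + (1*(1-t^2) - t*(-(2*t)))/(1-t^2)^2 = (3*t^2-1)/(1-t^2)^2"
proof -
  have u: "1 - t^2 = (1-t)*(1+t)" by (simp add: algebra_simps power2_eq_square)
  have "-1/(1-t) - 1/(1+t) = -2/((1-t)*(1+t))" using a by (simp add: field_simps)
  hence e: "-1/(1-t) - 1/(1+t) = -2/(1-t^2)" by (simp add: u)
  have "1-t^2 \<noteq> 0" using a by (simp add: u)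
  hence "-2/(1-t^2) + (1*(1-t^2) - t*(-(2*t)))/(1-t^2)^2 = (-2*(1-t^2) + (1*(1-t^2) - t*(-(2*t))))/(1-t^2)^2"
    by (rule aux_frac)
  also have "-2*(1-t^2) + (1*(1-t^2) - t*(-(2*t))) = 3*t^2-1" by (simp add: algebra_simps power2_eq_square)
  finally show ?thesis unfolding e .
qed
lemma gf_deriv:
  assumes x: "2*x > (1::real)"
  shows "(gf has_real_derivative ((12*x^2-1)*(2*x^2-1)/(2*x^2*(4*x^2-1)^2))) (at x)"
proof -
  have "(2*x)^2 > 1^2" using x by (intro power_strict_mono) auto
  hence "4*x^2-1 > 0" by (simp add: power_mult_distrib)
  hence nz: "2*x*(4*x^2-1) \<noteq> 0" using x by simp
  have d1: "((\<lambda>x. (ln(2*x-1) - ln(2*x+1))/2) has_real_derivative (1/(2*x-1) - 1/(2*x+1))) (at x)"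
    using x by (auto intro!: derivative_eq_intros)
  have d2: "((\<lambda>x. (1-2*x^2)/(2*x*(4*x^2-1))) has_real_derivative 
      ((- (4*x)) * (2*x*(4*x^2-1)) - (1-2*x^2)*(24*x^2-2)) / (2*x*(4*x^2-1))^2) (at x)"
  proof -
    have n: "((\<lambda>x. 1-2*x^2) has_real_derivative (-(4*x))) (at x)"
      by (rule DERIV_cong, (rule derivative_eq_intros refl)+) simp
    have dd: "((\<lambda>x. 2*x*(4*x^2-1)) has_real_derivative (24*x^2-2)) (at x)"
      by (rule DERIV_cong, (rule derivative_eq_intros refl)+) (simp add: algebra_simps power2_eq_square)
    show ?thesis using DERIV_divide[OF n dd nz] by (simp only: power2_eq_square)
  qed
  have "(gf has_real_derivative (1/(2*x-1) - 1/(2*x+1)) + 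
      ((- (4*x)) * (2*x*(4*x^2-1)) - (1-2*x^2)*(24*x^2-2)) / (2*x*(4*x^2-1))^2) (at x)"
    unfolding gf_def[abs_def] by (rule DERIV_add[OF d1 d2])
  moreover have "(1/(2*x-1) - 1/(2*x+1)) + 
      ((- (4*x)) * (2*x*(4*x^2-1)) - (1-2*x^2)*(24*x^2-2)) / (2*x*(4*x^2-1))^2
      = (12*x^2-1)*(2*x^2-1)/(2*x^2*(4*x^2-1)^2)"
  proof -
    have a: "2*x-1 \<noteq> 0" "2*x+1 \<noteq> 0" "x \<noteq> 0" "4*x^2-1 \<noteq> 0" using x nz by auto
    show ?thesis by (rule gf_deriv_eq[OF a])
  qed
  ultimately show ?thesis by simp
qed

lemma kf_deriv:
  assumes t: "0 \<le> t" "t < (1::real)"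
  shows "(kf has_real_derivative ((3*t^2-1)/(1-t^2)^2)) (at t)"
proof -
  have h: "1-t^2 \<noteq> 0" using t abs_square_less_1[of t] by simp
  have d1: "((\<lambda>t. ln(1-t) - ln(1+t)) has_real_derivative (-1/(1-t) - 1/(1+t))) (at t)"
    using t by (auto intro!: derivative_eq_intros simp: divide_simps)
  have d2: "((\<lambda>t. t/(1-t^2)) has_real_derivative (1*(1-t^2) - t*(-(2*t)))/(1-t^2)^2) (at t)"
    using h
    apply (rule_tac DERIV_cong)
     apply (rule derivative_eq_intros refl | assumption)+
    apply (simp add: power2_eq_square algebra_simps)
    done
  have "(kf has_real_derivative (-1/(1-t) - 1/(1+t)) + (1*(1-t^2) - t*(-(2*t)))/(1-t^2)^2) (at t)"
    unfolding kf_def[abs_def] by (rule DERIV_add[OF d1 d2])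
  moreover have "(-1/(1-t) - 1/(1+t)) + (1*(1-t^2) - t*(-(2*t)))/(1-t^2)^2 = (3*t^2-1)/(1-t^2)^2"
  proof -
    have a: "1-t \<noteq> 0" "1+t \<noteq> 0" using t by auto
    show ?thesis by (rule kf_deriv_eq[OF a])
  qed
  ultimately show ?thesis by simp
qed


lemma half_lt:
  fixes x :: real assumes "x > 0" "k*x^2 \<ge> 1" "k \<le> 3"
  shows "2*x > 1"
proof (rule ccontr)
  assume "\<not> 2*x > 1" hence "2*x \<le> 1" by simp
  hence "(2*x)^2 \<le> 1^2" using assms by (intro power_mono) auto
  hence "4*x^2 \<le> 1" by (simp add: power_mult_distrib)
  moreover have "k*x^2 \<le> 3*x^2" using assms by (intro mult_right_mono) auto
  ultimately show False using assms by simp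
qed

lemma gf_mono:
  assumes a: "0 < a" "1 \<le> 2*a^2" and ab: "a \<le> b"
  shows "gf a \<le> gf b"
proof (rule DERIV_nonneg_imp_nondecreasing[OF ab])
  fix x assume x: "a \<le> x" "x \<le> b"
  have "a^2 \<le> x^2" using a x by (intro power_mono) auto
  hence x2: "1 \<le> 2*x^2" using a by simp
  have x0: "x > 0" using a x by simp
  have "2*x > 1" by (rule half_lt[OF x0 x2]) simp
  moreover have "(12*x^2-1)*(2*x^2-1)/(2*x^2*(4*x^2-1)^2) \<ge> 0"
    using x2 by (intro divide_nonneg_nonneg mult_nonneg_nonneg) auto
  ultimately show "\<exists>y. DERIV gf x :> y \<and> y \<ge> 0" using gf_deriv by blast
qed

lemma gf_anti:
  assumes a: "0 < a" "1 \<le> 3*a^2" and ab: "a \<le> b" and b: "2*b^2 \<le> 1"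
  shows "gf b \<le> gf a"
proof (rule DERIV_nonpos_imp_nonincreasing[OF ab])
  fix x assume x: "a \<le> x" "x \<le> b"
  have "a^2 \<le> x^2" using a x by (intro power_mono) auto
  hence x3: "1 \<le> 3*x^2" using a by simp
  have "x^2 \<le> b^2" using a x by (intro power_mono) auto
  hence x2: "2*x^2 \<le> 1" using b by simp
  have x0: "x > 0" using a x by simp
  have "2*x > 1" by (rule half_lt[OF x0 x3]) simp
  moreover have "(12*x^2-1)*(2*x^2-1)/(2*x^2*(4*x^2-1)^2) \<le> 0"
    using x2 x3 by (intro divide_nonpos_nonneg mult_nonneg_nonpos) auto
  ultimately show "\<exists>y. DERIV gf x :> y \<and> y \<le> 0" using gf_deriv by blast
qed

lemma kf_anti:
  assumes a: "0 \<le> a" and ab: "a \<le> b" and b: "3*b^2 \<le> 1"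
  shows "kf b \<le> kf a"
proof (rule DERIV_nonpos_imp_nonincreasing[OF ab])
  fix x assume x: "a \<le> x" "x \<le> b"
  have "x^2 \<le> b^2" using a x by (intro power_mono) auto
  hence x3: "3*x^2 \<le> 1" using b by simp
  have x1: "x < 1"
  proof (rule ccontr)
    assume "\<not> x < 1" hence "1 \<le> x^2" by (simp add: one_le_power)
    thus False using x3 by simp
  qed
  moreover have "(3*x^2-1)/(1-x^2)^2 \<le> 0"
    using x3 by (intro divide_nonpos_nonneg) auto
  ultimately show "\<exists>y. DERIV kf x :> y \<and> y \<le> 0" using kf_deriv a x by (meson order_trans)
qed

lemma pf_strict:
  fixes a b :: real assumes "1 < 2*a" "a < b"
  shows "2*a*(4*a^2-1) < 2*b*(4*b^2-1)"
proof -
  have a0: "a > 0" using assms by simp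
  have "(2*a)^2 > 1^2" using assms by (intro power_strict_mono) auto
  hence p: "4*a^2-1 > 0" by (simp add: power_mult_distrib)
  have "a^2 < b^2" using a0 assms by (intro power_strict_mono) auto
  hence q: "4*a^2-1 < 4*b^2-1" by simp
  have "2*a*(4*a^2-1) < 2*b*(4*a^2-1)" using p assms by simp
  also have "\<dots> < 2*b*(4*b^2-1)" using q a0 assms by simp
  finally show ?thesis .
qed

lemma tf_strict:
  fixes a b :: real assumes "0 \<le> a" "a < b" "3*b^2 \<le> 1"
  shows "a - a^3 < b - b^3"
proof -
  have "a^2 < b^2" using assms by (intro power_strict_mono) auto
  moreover have "a*b < b^2" using assms by (simp add: power2_eq_square)
  ultimately have "a^2 + a*b + b^2 < 1" using assms by simp
  hence "0 < (b - a)*(1 - (a^2 + a*b + b^2))" using assms by simp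
  also have "(b - a)*(1 - (a^2 + a*b + b^2)) = (b - b^3) - (a - a^3)"
    by (simp add: algebra_simps power2_eq_square power3_eq_cube)
  finally show ?thesis by simp
qed

definition cc :: real where "cc = 3 * sqrt 3 / 2"

lemma cc_facts: "cc > 1" "1 / sqrt 2 < cc"
proof -
  have "sqrt 3 > 1" by simp
  thus "cc > 1" unfolding cc_def by linarith
  have "1 / sqrt 2 < 1" by simp
  thus "1 / sqrt 2 < cc" using \<open>cc > 1\<close> by linarith
qed

lemma ex_x:
  fixes q :: real assumes q: "q > 0" "q \<le> cc"
  shows "\<exists>x. x > 0 \<and> 3*x^2 \<ge> 1 \<and> 2*x*(4*x^2-1)*q = 1"
proof -
  define s where "s = sqrt 3 / 3"
  have s2: "s^2 = 1/3" by (simp add: s_def power_divide)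
  have s0: "s > 0" by (simp add: s_def)
  have "sqrt 3 < sqrt (3^2)" by (intro real_sqrt_less_mono) simp
  hence s1: "s < 1" by (simp add: s_def)
  have "2* s*(4* s^2-1) = 2* s/3" by (simp add: s2)
  also have "\<dots> \<le> 1/q"
  proof -
    have "2* s/3 * q \<le> 2* s/3 * cc" using q s0 by simp
    also have "\<dots> = 1" by (simp add: s_def cc_def)
    finally show ?thesis using q by (simp add: field_simps)
  qed
  finally have lo: "2* s*(4* s^2-1) \<le> 1/q" .
  define b where "b = 1 + 1/q"
  have b1: "b \<ge> 1" "b \<ge> 1/q" using q by (auto simp: b_def)
  have "1 \<le> b^2" using b1 by (simp add: one_le_power)
  hence "3 \<le> 4*b^2-1" by simp
  hence "2*b*3 \<le> 2*b*(4*b^2-1)" using b1 by (intro mult_left_mono) auto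
  hence hi: "1/q \<le> 2*b*(4*b^2-1)" using b1 by linarith
  have "s \<le> b" using s1 b1 by simp
  have ct: "continuous_on {s..b} (\<lambda>x. 2*x*(4*x^2-1))" by (intro continuous_intros)
  from IVT'[of "\<lambda>x. 2*x*(4*x^2-1)", OF lo hi \<open>s \<le> b\<close> ct]
  obtain x where x: "s \<le> x" "x \<le> b" "2*x*(4*x^2-1) = 1/q"
    by auto
  have "s^2 \<le> x^2" using x s0 by (intro power_mono) auto
  hence "3*x^2 \<ge> 1" using s2 by simp
  moreover have "x > 0" using x s0 by simp
  moreover have "2*x*(4*x^2-1)*q = 1" using x q by simp
  ultimately show ?thesis by blast
qed

lemma ex_t:
  fixes q :: real assumes q: "cc \<le> q"
  shows "\<exists>t. t > 0 \<and> 3*t^2 \<le> 1 \<and> q*(t - t^3) = 1"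
proof -
  have q0: "q > 0" using q cc_facts by simp
  define s where "s = sqrt 3 / 3"
  have s2: "s^2 = 1/3" by (simp add: s_def power_divide)
  have s0: "s > 0" by (simp add: s_def)
  have e1: "s - s^3 = s * (1 - s^2)" by (simp add: algebra_simps power2_eq_square power3_eq_cube)
  have e2: "1/q \<le> 2* s/3"
  proof -
    have "1 = 2* s/3 * cc" by (simp add: s_def cc_def)
    also have "\<dots> \<le> 2* s/3 * q" using q s0 by simp
    finally show ?thesis using q0 by (simp add: field_simps)
  qed
  have hi: "1/q \<le> s - s^3" using e1 e2 s2 by simp
  have lo: "0 - 0^3 \<le> 1/q" using q0 by simp
  have s0': "0 \<le> s" using s0 by simp
  have ct: "continuous_on {0..s} (\<lambda>t. t - t^3)" by (intro continuous_intros)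
  from IVT'[of "\<lambda>t. t - t^3", OF lo hi s0' ct]
  obtain t where t: "0 \<le> t" "t \<le> s" "t - t^3 = 1/q"
    by auto
  have "t \<noteq> 0" using t q0 by auto
  hence "t > 0" using t by simp
  moreover have "t^2 \<le> s^2" using t by (intro power_mono) auto
  hence "3*t^2 \<le> 1" using s2 by simp
  moreover have "q*(t - t^3) = 1" using t q0 by simp
  ultimately show ?thesis by blast
qed

lemma H_x:
  fixes q :: real assumes "q > 0" "q \<le> cc"
  shows "\<exists>x. x > 0 \<and> 3*x^2 \<ge> 1 \<and> 2*x*(4*x^2-1)*q = 1 \<and> Htilde q = exp (gf x)"
  using ex_x[OF assms] Htilde_complex assms by blast

lemma H_t:
  fixes q :: real assumes "cc \<le> q"
  shows "\<exists>t. t > 0 \<and> 3*t^2 \<le> 1 \<and> q*(t - t^3) = 1 \<and> Htilde q = exp (kf t)"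
  using ex_t[OF assms] Htilde_real by blast

lemma pf_order:
  fixes x1 x2 q1 q2 :: real
  assumes "q1 > 0" "q1 \<le> q2" "x1 > 0" "3*x1^2 \<ge> 1"
    "2*x1*(4*x1^2-1)*q1 = 1" "2*x2*(4*x2^2-1)*q2 = 1"
  shows "x2 \<le> x1"
proof (rule ccontr)
  assume "\<not> x2 \<le> x1" hence lt: "x1 < x2" by simp
  have "2*x1 > 1" by (rule half_lt[OF assms(3) assms(4)]) simp
  from pf_strict[OF this lt] have "2*x1*(4*x1^2-1) < 2*x2*(4*x2^2-1)" .
  hence "2*x1*(4*x1^2-1)*q1 < 2*x2*(4*x2^2-1)*q1" by (rule mult_strict_right_mono[OF _ assms(1)])
  also have "\<dots> \<le> 2*x2*(4*x2^2-1)*q2"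
  proof -
    have "2*x2*(4*x2^2-1) > 0"
      using assms(6) assms(1,2) by (metis mult_pos_pos zero_less_mult_pos2 zero_less_one less_le_trans)
    thus ?thesis using assms(2) by (intro mult_left_mono) auto
  qed
  finally show False using assms by simp
qed

lemma tf_order:
  fixes t1 t2 q1 q2 :: real
  assumes "q1 > 0" "q1 \<le> q2" "t1 > 0" "3*t2^2 \<le> 1"
    "q1*(t1 - t1^3) = 1" "q2*(t2 - t2^3) = 1"
  shows "t2 \<le> t1"
proof (rule ccontr)
  assume "\<not> t2 \<le> t1" hence lt: "t1 < t2" by simp
  from tf_strict[OF _ lt assms(4)] assms(3) have a: "t1 - t1^3 < t2 - t2^3" by simp
  have "t1 - t1^3 > 0" using assms by (metis mult_pos_pos zero_less_mult_pos zero_less_one)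
  hence "q1*(t1 - t1^3) < q2*(t2 - t2^3)" using assms a
    by (meson less_le_trans mult_right_mono mult_strict_left_mono less_imp_le)
  thus False using assms by simp
qed

lemma sq_half: "0 < q \<Longrightarrow> q < 1 / sqrt 2 \<Longrightarrow> q^2 < 1/2"
proof -
  assume "0 < q" "q < 1 / sqrt 2"
  hence "q^2 < (1/sqrt 2)^2" by (intro power_strict_mono) auto
  thus ?thesis by (simp add: power_divide)
qed

lemma sq_half': "1 / sqrt 2 \<le> q \<Longrightarrow> q^2 \<ge> 1/2"
proof -
  assume "1 / sqrt 2 \<le> q"
  hence "(1/sqrt 2)^2 \<le> q^2" by (intro power_mono) auto
  thus ?thesis by (simp add: power_divide)
qed

lemma anti_part:
  fixes q1 q2 :: real
  assumes "0 < q1" "q1 \<le> q2" "q2 < 1 / sqrt 2"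
  shows "Htilde q2 \<le> Htilde q1"
proof -
  have c: "q2 \<le> cc" using assms cc_facts by simp
  obtain x1 where x1: "x1 > 0" "3*x1^2 \<ge> 1" "2*x1*(4*x1^2-1)*q1 = 1" "Htilde q1 = exp (gf x1)"
    using H_x[of q1] assms c by auto
  obtain x2 where x2: "x2 > 0" "3*x2^2 \<ge> 1" "2*x2*(4*x2^2-1)*q2 = 1" "Htilde q2 = exp (gf x2)"
    using H_x[of q2] assms c by auto
  have q2p: "q2 > 0" using assms by simp
  have le: "x2 \<le> x1" using pf_order[OF assms(1,2) x1(1,2,3) x2(3)] .
  have h2: "2*x2^2 \<ge> 1"
  proof (rule ccontr)
    assume "\<not> 2*x2^2 \<ge> 1" hence s: "x2^2 < 1/2" by simp
    have "4*x2^2 - 1 < 1" using s by simp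
    hence "2*x2*(4*x2^2-1) < 2*x2*1" using x2 by (intro mult_strict_left_mono) auto
    hence "2*x2*(4*x2^2-1)*q2 < 2*x2*1*q2" by (rule mult_strict_right_mono[OF _ q2p])
    hence "1 < 2*x2*q2" using x2 by simp
    hence "1^2 < (2*x2*q2)^2" by (intro power_strict_mono) auto
    hence "1 < 4 * (x2^2 * q2^2)" by (simp add: power_mult_distrib)
    moreover have "x2^2 * q2^2 < 1/2 * (1/2)"
      using s sq_half[OF q2p assms(3)] by (intro mult_strict_mono) auto
    ultimately show False by simp
  qed
  have "gf x2 \<le> gf x1" by (rule gf_mono[OF x2(1) h2 le])
  thus ?thesis using x1 x2 by simp
qed

lemma mono_part1:
  fixes q1 q2 :: real
  assumes "1 / sqrt 2 \<le> q1" "q1 \<le> q2" "q2 \<le> cc"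
  shows "Htilde q1 \<le> Htilde q2"
proof -
  have "0 < 1 / sqrt 2" by simp
  hence q1p: "q1 > 0" using assms(1) by linarith
  obtain x1 where x1: "x1 > 0" "3*x1^2 \<ge> 1" "2*x1*(4*x1^2-1)*q1 = 1" "Htilde q1 = exp (gf x1)"
    using H_x[of q1] assms q1p by auto
  obtain x2 where x2: "x2 > 0" "3*x2^2 \<ge> 1" "2*x2*(4*x2^2-1)*q2 = 1" "Htilde q2 = exp (gf x2)"
    using H_x[of q2] assms q1p by auto
  have le: "x2 \<le> x1" using pf_order[OF q1p assms(2) x1(1,2,3) x2(3)] .
  have h1: "2*x1^2 \<le> 1"
  proof (rule ccontr)
    assume "\<not> 2*x1^2 \<le> 1" hence s: "x1^2 > 1/2" by simp
    have "4*x1^2 - 1 > 1" using s by simp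
    hence "2*x1*(4*x1^2-1) > 2*x1*1" using x1 by (intro mult_strict_left_mono) auto
    hence "2*x1*(4*x1^2-1)*q1 > 2*x1*1*q1" by (rule mult_strict_right_mono[OF _ q1p])
    hence "1 > 2*x1*q1" using x1 by simp
    hence "(2*x1*q1)^2 < 1^2" using x1 q1p by (intro power_strict_mono) auto
    hence "4 * (x1^2 * q1^2) < 1" by (simp add: power_mult_distrib)
    moreover have "x1^2 * q1^2 > 1/2 * (1/2)"
      using s sq_half'[OF assms(1)] by (intro mult_less_le_imp_less) auto
    ultimately show False by simp
  qed
  have "gf x1 \<le> gf x2" by (rule gf_anti[OF x2(1) x2(2) le h1])
  thus ?thesis using x1 x2 by simp
qed

lemma mono_part2:
  fixes q1 q2 :: real
  assumes "cc \<le> q1" "q1 \<le> q2"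
  shows "Htilde q1 \<le> Htilde q2"
proof -
  have q1p: "q1 > 0" using assms cc_facts by simp
  obtain t1 where t1: "t1 > 0" "3*t1^2 \<le> 1" "q1*(t1 - t1^3) = 1" "Htilde q1 = exp (kf t1)"
    using H_t[of q1] assms by auto
  obtain t2 where t2: "t2 > 0" "3*t2^2 \<le> 1" "q2*(t2 - t2^3) = 1" "Htilde q2 = exp (kf t2)"
    using H_t[of q2] assms by auto
  have le: "t2 \<le> t1" using tf_order[OF q1p assms(2) t1(1) t2(2) t1(3) t2(3)] .
  have "kf t1 \<le> kf t2" using kf_anti[of t2 t1] t1 t2 le by simp
  thus ?thesis using t1 t2 by simp
qed

lemma t_bound:
  fixes q t :: real assumes t: "t > 0" "3*t^2 \<le> 1" and e: "q*(t - t^3) = 1"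
  shows "t \<le> 3/(2*q)"
proof -
  have tt: "t - t^3 = t*(1-t^2)" by (simp add: algebra_simps power2_eq_square power3_eq_cube)
  have "t*(2/3) \<le> t*(1-t^2)" using t by (intro mult_left_mono) auto
  hence a: "t*(2/3) \<le> t - t^3" using tt by simp
  have "t - t^3 > 0" using a t by simp
  hence q: "q > 0" using e zero_less_mult_pos2[of q "t - t^3"] by simp
  have "q*(t*(2/3)) \<le> q*(t - t^3)" using a q by (intro mult_left_mono) auto
  hence "q*(t*(2/3)) \<le> 1" using e by simp
  moreover have "t*(2*q) = 3*(q*(t*(2/3)))" by simp
  ultimately have "t*(2*q) \<le> 3" by linarith
  thus ?thesis using q by (simp add: pos_le_divide_eq)
qed

theorem theorem3:
  shows "antimono_on {0<..<1 / sqrt 2} Htilde \<and> mono_on {1 / sqrt 2..} Htilde \<and>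
         (Htilde \<longlongrightarrow> 1) (at_right 0) \<and> (Htilde \<longlongrightarrow> 1) at_top"
proof (intro conjI)
  show "antimono_on {0<..<1 / sqrt 2} Htilde"
    unfolding monotone_on_def using anti_part by auto
  show "mono_on {1 / sqrt 2..} Htilde"
    unfolding monotone_on_def
  proof (intro ballI impI)
    fix q1 q2 assume a: "q1 \<in> {1 / sqrt 2..}" "q2 \<in> {1 / sqrt 2..}" "q1 \<le> q2"
    show "Htilde q1 \<le> Htilde q2"
    proof (cases "q2 \<le> cc")
      case True thus ?thesis using mono_part1 a by auto
    next
      case False
      show ?thesis
      proof (cases "cc \<le> q1")
        case True thus ?thesis using mono_part2 a by auto
      next
        case False
        hence "Htilde q1 \<le> Htilde cc" using mono_part1 a by auto
        also have "\<dots> \<le> Htilde q2" using mono_part2 \<open>\<not> q2 \<le> cc\<close> by auto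
        finally show ?thesis .
      qed
    qed
  qed
  show "(Htilde \<longlongrightarrow> 1) (at_right 0)"
  proof -
    define X where "X q = (SOME x. x > 0 \<and> 3*x^2 \<ge> 1 \<and> 2*x*(4*x^2-1)*q = 1 \<and> Htilde q = exp (gf x))" for q
    have Xp: "X q > 0 \<and> 3*(X q)^2 \<ge> 1 \<and> 2*(X q)*(4*(X q)^2-1)*q = 1 \<and> Htilde q = exp (gf (X q))"
      if "q > 0" "q \<le> cc" for q
      unfolding X_def by (rule someI_ex[OF H_x[OF that]])
    have lim_g: "((\<lambda>x. exp (gf x)) \<longlongrightarrow> 1) at_top" unfolding gf_def by real_asymp
    have fX: "filterlim X at_top (at_right 0)"
      unfolding filterlim_at_top
    proof
      fix Z :: real
      define B where "B = max Z 1"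
      have B1: "B \<ge> 1" by (simp add: B_def)
      have "1 \<le> B^2" using B1 by (simp add: one_le_power)
      hence "2*B*3 \<le> 2*B*(4*B^2-1)" using B1 by (intro mult_left_mono) auto
      hence pB: "2*B*(4*B^2-1) > 0" using B1 by linarith
      have m: "0 < min cc (1/(2*B*(4*B^2-1)))" using pB cc_facts by simp
      show "eventually (\<lambda>q. Z \<le> X q) (at_right 0)"
        using eventually_at_right_real[OF m]
      proof (rule eventually_mono)
        fix q assume q: "q \<in> {0<..<min cc (1/(2*B*(4*B^2-1)))}"
        hence q0: "q > 0" "q \<le> cc" by auto
        note P = Xp[OF q0]
        have "B \<le> X q"
        proof (rule ccontr)
          assume "\<not> B \<le> X q" hence lt: "X q < B" by simp
          have "2 * X q > 1" by (rule half_lt[of _ 3]) (use P in auto)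
          from pf_strict[OF this lt] have "2*(X q)*(4*(X q)^2-1)*q < 2*B*(4*B^2-1)*q"
            using q0 by simp
          also have "\<dots> < 1" using q pB by (simp add: less_divide_eq mult.commute)
          finally show False using P by simp
        qed
        thus "Z \<le> X q" by (simp add: B_def)
      qed
    qed
    have "((\<lambda>q. exp (gf (X q))) \<longlongrightarrow> 1) (at_right 0)" by (rule filterlim_compose[OF lim_g fX])
    moreover have "eventually (\<lambda>q. Htilde q = exp (gf (X q))) (at_right 0)"
      using eventually_at_right_real[OF cc_facts(1)[THEN order.strict_trans[OF zero_less_one]]]
      by (rule eventually_mono) (use Xp in auto)
    ultimately show ?thesis by (simp add: tendsto_cong)
  qed
  show "(Htilde \<longlongrightarrow> 1) at_top"
  proof -
    define T where "T q = (SOME t. t > 0 \<and> 3*t^2 \<le> 1 \<and> q*(t - t^3) = 1 \<and> Htilde q = exp (kf t))" for q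
    have Tp: "T q > 0 \<and> 3*(T q)^2 \<le> 1 \<and> q*(T q - (T q)^3) = 1 \<and> Htilde q = exp (kf (T q))"
      if "cc \<le> q" for q
      unfolding T_def by (rule someI_ex[OF H_t[OF that]])
    have ev: "eventually (\<lambda>q. cc \<le> q) at_top" by (rule eventually_ge_at_top)
    have T0: "(T \<longlongrightarrow> 0) at_top"
    proof (rule tendsto_sandwich[of "\<lambda>_. 0" _ _ "\<lambda>q. 3/(2*q)"])
      show "eventually (\<lambda>q. 0 \<le> T q) at_top"
        using ev by (rule eventually_mono) (use Tp in force)
      show "eventually (\<lambda>q. T q \<le> 3/(2*q)) at_top"
        using ev by (rule eventually_mono) (use Tp t_bound in blast)
      show "((\<lambda>_. 0::real) \<longlongrightarrow> 0) at_top" by simp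
      show "((\<lambda>q::real. 3/(2*q)) \<longlongrightarrow> 0) at_top" by real_asymp
    qed
    have c: "isCont (\<lambda>t. exp (kf t)) 0" unfolding kf_def by (intro continuous_intros) auto
    have "((\<lambda>q. exp (kf (T q))) \<longlongrightarrow> exp (kf 0)) at_top"
      by (rule isCont_tendsto_compose[OF c T0])
    hence l: "((\<lambda>q. exp (kf (T q))) \<longlongrightarrow> 1) at_top" by (simp add: kf_def)
    have "eventually (\<lambda>q. Htilde q = exp (kf (T q))) at_top"
      using ev by (rule eventually_mono) (use Tp in blast)
    with l show ?thesis by (simp add: tendsto_cong)
  qed
qed

end
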